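(* Let $\mathbb{L}/\mathbb{K}$ be a finite Galois extension with Galois group $G$ and let $\mathcal{A},\mathcal{B},\mathcal{C}\subseteq\mathbb{L}[G]$ be $\mathbb{L}$-linear codes with $\mathcal{B}\circ\mathcal{A}\subseteq\mathcal{C}^\perp$. Let $r=c+e$ with $c\in\mathcal{C}$, $e\in\mathbb{L}[G]$, and let $I=\mathrm{supp}(e)$. Then (1) $\mathcal{K}(r)=\mathcal{K}(e)$; (2) $\mathrm{Short}_I(\mathcal{A})\subseteq\mathcal{K}(e)$; (3) if $\mathrm{rk}_\mathbb{K}(e)<d(\mathcal{B}^\perp)$, then $\mathrm{Short}_I(\mathcal{A})=\mathcal{K}(e)$.
   Context: $\mathbb{L}[G]$ has composition product $(ag)\circ(bh)=(a\,g(b))(gh)$; $a=\sum a_gg$ acts on $\mathbb{L}$ as $x\mapsto\sum a_gg(x)$, with kernel $\ker(a)\subseteq\mathbb{L}$ and rank $\mathrm{rk}_\mathbb{K}(a)$. A code is an $\mathbb{L}$-subspace of $\mathbb{L}[G]$; its minimum distance $d(\mathcal{D})$ is the minimum of $\mathrm{rk}_\mathbb{K}(x)$ over nonzero $x\in\mathcal{D}$. $\langle\sum a_gg,\sum b_gg\rangle_{\mathbb{L}[G]}=\sum a_gb_g$ and $\mathcal{D}^\perp$ is the orthogonal for this form. $\mathcal{B}\circ\mathcal{A}=\mathrm{span}_\mathbb{L}\{b\circ a:a\in\mathcal{A},b\in\mathcal{B}\}$. The support $\mathrm{supp}(a)$ is the orthogonal of $\ker(a)$ in $\mathbb{L}$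 with respect to $(x,y)\mapsto\mathrm{Tr}_{\mathbb{L}/\mathbb{K}}(xy)$. For a $\mathbb{K}$-subspace $I\subseteq\mathbb{L}$, $\mathrm{Short}_I(\mathcal{A})=\{a\in\mathcal{A}: I\subseteq\ker(a)\}$. For $x\in\mathbb{L}[G]$, $\mathcal{K}(x)=\{a\in\mathcal{A}:\langle b\circ a,x\rangle_{\mathbb{L}[G]}=0\ \forall b\in\mathcal{B}\}$. *)

theory Defs
  imports Main "HOL-Library.Extended_Nat"
begin

text \<open>A finite Galois extension L/K with Galois group G is modelled as follows:
  L is the ambient field type 'l, G is a finite group (under composition) of field
  automorphisms of 'l, and K is the fixed field of G (Artin's theorem).\<close>

definition field_aut :: "('l::field \<Rightarrow> 'l) \<Rightarrow> bool" where
  "field_aut g \<longleftrightarrow> bij g \<and> (\<forall>x y. g (x + y) = g x + g y) \<and> (\<forall>x y. g (x * y) = g x * g y) \<and> g 1 = 1"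

definition aut_group :: "('l::field \<Rightarrow> 'l) set \<Rightarrow> bool" where
  "aut_group G \<longleftrightarrow> finite G \<and> id \<in> G \<and> (\<forall>g\<in>G. field_aut g) \<and>
     (\<forall>g\<in>G. \<forall>h\<in>G. g \<circ> h \<in> G) \<and> (\<forall>g\<in>G. inv g \<in> G)"

definition fixed_field :: "('l \<Rightarrow> 'l) set \<Rightarrow> 'l set" where
  "fixed_field G = {x. \<forall>g\<in>G. g x = x}"

text \<open>Elements of L[G]: functions G \<rightarrow> L (zero outside G).\<close>
type_synonym 'l skew = "('l \<Rightarrow> 'l) \<Rightarrow> 'l"

definition skew_alg :: "('l \<Rightarrow> 'l) set \<Rightarrow> ('l::zero) skew set" where
  "skew_alg G = {a. \<forall>g. g \<notin> G \<longrightarrow> a g = 0}"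

text \<open>Composition product: (a g) o (b h) = (a g(b)) (g h).\<close>
definition skew_comp :: "('l \<Rightarrow> 'l) set \<Rightarrow> 'l::field skew \<Rightarrow> 'l skew \<Rightarrow> 'l skew" where
  "skew_comp G b a = (\<lambda>h. \<Sum>g\<in>G. \<Sum>k\<in>G. if g \<circ> k = h then b g * g (a k) else 0)"

definition skew_eval :: "('l \<Rightarrow> 'l) set \<Rightarrow> 'l::field skew \<Rightarrow> 'l \<Rightarrow> 'l" where
  "skew_eval G a x = (\<Sum>g\<in>G. a g * g x)"

definition skew_ker :: "('l \<Rightarrow> 'l) set \<Rightarrow> 'l::field skew \<Rightarrow> 'l set" where
  "skew_ker G a = {x. skew_eval G a x = 0}"

definition kspan :: "'l::field set \<Rightarrow> 'l set \<Rightarrow> 'l set" where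
  "kspan K S = {x. \<exists>F c. finite F \<and> F \<subseteq> S \<and> (\<forall>v\<in>F. c v \<in> K) \<and> x = (\<Sum>v\<in>F. c v * v)}"

definition kdim :: "'l::field set \<Rightarrow> 'l set \<Rightarrow> nat" where
  "kdim K V = (LEAST n. \<exists>F. finite F \<and> F \<subseteq> V \<and> card F = n \<and> kspan K F = V)"

definition skew_rank :: "('l \<Rightarrow> 'l) set \<Rightarrow> 'l::field skew \<Rightarrow> nat" where
  "skew_rank G a = kdim (fixed_field G) (range (skew_eval G a))"

definition lcode :: "('l \<Rightarrow> 'l) set \<Rightarrow> 'l::field skew set \<Rightarrow> bool" where
  "lcode G D \<longleftrightarrow> D \<subseteq> skew_alg G \<and> (\<lambda>_. 0) \<in> D \<and>
     (\<forall>x\<in>D. \<forall>y\<in>D. (\<lambda>g. x g + y g) \<in> D) \<and> (\<forall>l. \<forall>x\<in>D. (\<lambda>g. l * x g) \<in> D)"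

text \<open>Minimum distance (infinity for the zero code).\<close>
definition min_dist :: "('l \<Rightarrow> 'l) set \<Rightarrow> 'l::field skew set \<Rightarrow> enat" where
  "min_dist G D = (INF x\<in>D - {\<lambda>_. 0}. enat (skew_rank G x))"

definition skew_inner :: "('l \<Rightarrow> 'l) set \<Rightarrow> 'l::field skew \<Rightarrow> 'l skew \<Rightarrow> 'l" where
  "skew_inner G a b = (\<Sum>g\<in>G. a g * b g)"

definition dual_code :: "('l \<Rightarrow> 'l) set \<Rightarrow> 'l::field skew set \<Rightarrow> 'l skew set" where
  "dual_code G D = {x \<in> skew_alg G. \<forall>y\<in>D. skew_inner G x y = 0}"

definition lspan :: "('l \<Rightarrow> 'l) set \<Rightarrow> 'l::field skew set \<Rightarrow> 'l skew set" where
  "lspan G S = {x. \<exists>F c. finite F \<and> F \<subseteq> S \<and> x = (\<lambda>g. \<Sum>v\<in>F. c v * v g)}"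

definition code_prod :: "('l \<Rightarrow> 'l) set \<Rightarrow> 'l::field skew set \<Rightarrow> 'l skew set \<Rightarrow> 'l skew set" where
  "code_prod G B A = lspan G {skew_comp G b a | a b. a \<in> A \<and> b \<in> B}"

definition trace :: "('l \<Rightarrow> 'l) set \<Rightarrow> 'l::field \<Rightarrow> 'l" where
  "trace G x = (\<Sum>g\<in>G. g x)"

definition skew_supp :: "('l \<Rightarrow> 'l) set \<Rightarrow> 'l::field skew \<Rightarrow> 'l set" where
  "skew_supp G a = {y. \<forall>x\<in>skew_ker G a. trace G (x * y) = 0}"

definition short_code :: "('l \<Rightarrow> 'l) set \<Rightarrow> 'l::field set \<Rightarrow> 'l skew set \<Rightarrow> 'l skew set" where
  "short_code G I A = {a\<in>A. I \<subseteq> skew_ker G a}"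

definition Kset :: "('l \<Rightarrow> 'l) set \<Rightarrow> 'l::field skew set \<Rightarrow> 'l skew set \<Rightarrow> 'l skew \<Rightarrow> 'l skew set" where
  "Kset G A B x = {a\<in>A. \<forall>b\<in>B. skew_inner G (skew_comp G b a) x = 0}"

end

theory Submission imports Defs "HOL-Library.Function_Algebras" begin


lemma fa_bij: "field_aut g \<Longrightarrow> bij g" by (simp add: field_aut_def)
lemma fa_add: "field_aut g \<Longrightarrow> g (x + y) = g x + g y" by (simp add: field_aut_def)
lemma fa_mult: "field_aut g \<Longrightarrow> g (x * y) = g x * g y" by (simp add: field_aut_def)
lemma fa_one: "field_aut g \<Longrightarrow> g 1 = 1" by (simp add: field_aut_def)
lemma fa_additive: "field_aut g \<Longrightarrow> additive g" by (simp add: additive_def fa_add)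
lemma fa_zero: "field_aut g \<Longrightarrow> g 0 = 0" using additive.zero[OF fa_additive] .
lemma fa_minus: "field_aut g \<Longrightarrow> g (- x) = - g x" using additive.minus[OF fa_additive] .
lemma fa_diff: "field_aut g \<Longrightarrow> g (x - y) = g x - g y" using additive.diff[OF fa_additive] .
lemma fa_sum: "field_aut g \<Longrightarrow> g (sum f A) = (\<Sum>x\<in>A. g (f x))" using additive.sum[OF fa_additive] .
lemma fa_inv_cancel1: "field_aut g \<Longrightarrow> g (inv g x) = x"
  by (meson bij_is_surj fa_bij surj_f_inv_f)
lemma fa_inv_cancel2: "field_aut g \<Longrightarrow> inv g (g x) = x"
  by (meson bij_is_inj fa_bij inv_f_f)
lemma fa_inverse: "field_aut g \<Longrightarrow> g (inverse x) = inverse (g x)"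
proof (cases "x = 0")
  case True assume "field_aut g" then show ?thesis using True by (simp add: fa_zero)
next
  case False assume g: "field_aut g"
  have "g x * g (inverse x) = 1" using g False by (simp add: fa_mult[symmetric] fa_one)
  then show ?thesis by (metis inverse_unique mult.commute)
qed

lemma ag_finite: "aut_group G \<Longrightarrow> finite G" by (simp add: aut_group_def)
lemma ag_id: "aut_group G \<Longrightarrow> id \<in> G" by (simp add: aut_group_def)
lemma ag_fa: "aut_group G \<Longrightarrow> g \<in> G \<Longrightarrow> field_aut g" by (simp add: aut_group_def)
lemma ag_comp: "aut_group G \<Longrightarrow> g \<in> G \<Longrightarrow> h \<in> G \<Longrightarrow> g \<circ> h \<in> G" by (simp add: aut_group_def)
lemma ag_inv: "aut_group G \<Longrightarrow> g \<in> G \<Longrightarrow> inv g \<in> G" by (simp add: aut_group_def)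

lemma comp_inv_right: "field_aut k \<Longrightarrow> (g \<circ> k) \<circ> inv k = g"
  by (rule ext) (simp add: fa_inv_cancel1)
lemma comp_inv_left: "field_aut k \<Longrightarrow> (g \<circ> inv k) \<circ> k = g"
  by (rule ext) (simp add: fa_inv_cancel2)

lemma reindex_right:
  assumes G: "aut_group G" and k: "k \<in> G"
  shows "(\<Sum>h\<in>G. f (h \<circ> k)) = (\<Sum>h\<in>G. f h)"
proof (rule sum.reindex_bij_witness[of _ "\<lambda>m. m \<circ> inv k" "\<lambda>g. g \<circ> k"])
  have fk: "field_aut k" using G k by (rule ag_fa)
  fix a assume "a \<in> G"
  then show "a \<circ> inv k \<circ> k = a" "a \<circ> inv k \<in> G" "a \<circ> k \<in> G" "a \<circ> k \<circ> inv k = a"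
    using fk G k by (auto simp: comp_inv_left comp_inv_right ag_comp ag_inv)
qed auto



lemma dedekind:
  assumes "finite S" "\<forall>g\<in>S. field_aut g" "\<forall>x. (\<Sum>g\<in>S. c g * g x) = 0"
  shows "\<forall>g\<in>S. c g = (0::'l::field)"
  using assms
proof (induction S arbitrary: c rule: finite_induct)
  case empty then show ?case by simp
next
  case (insert h S)
  have fh: "field_aut h" using insert by auto
  have eq: "c h * h x + (\<Sum>g\<in>S. c g * g x) = 0" for x
    using insert.prems(2)[rule_format, of x] insert.hyps by simp
  have zero: "c g * (g y - h y) = 0" if "g \<in> S" for g y
  proof -
    have "\<forall>x. (\<Sum>g\<in>S. (c g * (g y - h y)) * g x) = 0"
    proof
      fix x
      have fa: "\<forall>g\<in>S. field_aut g" using insert by auto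
      have "(\<Sum>g\<in>S. (c g * (g y - h y)) * g x) = (\<Sum>g\<in>S. c g * g (y * x)) - h y * (\<Sum>g\<in>S. c g * g x)"
        using fa by (simp add: sum_distrib_left sum_subtractf[symmetric] fa_mult algebra_simps)
      also have "\<dots> = (- c h * h (y * x)) - h y * (- c h * h x)"
      proof -
        have a: "(\<Sum>g\<in>S. c g * g (y * x)) = - (c h * h (y * x))"
          using eq[of "y*x"] by (metis add.commute eq_neg_iff_add_eq_0)
        have b: "(\<Sum>g\<in>S. c g * g x) = - (c h * h x)"
          using eq[of "x"] by (metis add.commute eq_neg_iff_add_eq_0)
        show ?thesis unfolding a b by simp
      qed
      also have "\<dots> = 0" using fh by (simp add: fa_mult)
      finally show "(\<Sum>g\<in>S. (c g * (g y - h y)) * g x) = 0" .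
    qed
    then have "\<forall>g\<in>S. c g * (g y - h y) = 0"
      using insert.IH[of "\<lambda>g. c g * (g y - h y)"] insert.prems(1) by auto
    then show ?thesis using that by auto
  qed
  have cS: "c g = 0" if "g \<in> S" for g
  proof -
    have "g \<noteq> h" using that insert.hyps by auto
    then obtain y where "g y \<noteq> h y" by (meson ext)
    then show ?thesis using zero[OF that, of y] by simp
  qed
  have "c h * h 1 = 0" using eq[of 1] cS by simp
  then have "c h = 0" using fh by (simp add: fa_one)
  then show ?case using cS by auto
qed

lemma dedekind_group:
  assumes "aut_group G" "\<forall>x. (\<Sum>g\<in>G. c g * g x) = 0" "g \<in> G"
  shows "c g = (0::'l::field)"
  using dedekind[of G c] assms ag_finite ag_fa by blast

definition kfield :: "'l::field set \<Rightarrow> bool" where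
  "kfield K \<longleftrightarrow> 0 \<in> K \<and> 1 \<in> K \<and> (\<forall>x\<in>K. \<forall>y\<in>K. x + y \<in> K \<and> x * y \<in> K) \<and>
     (\<forall>x\<in>K. - x \<in> K \<and> inverse x \<in> K)"

lemma kfield_fixed: "aut_group G \<Longrightarrow> kfield (fixed_field G)"
  unfolding kfield_def fixed_field_def
  by (auto dest: ag_fa simp: fa_zero fa_one fa_minus fa_inverse) (metis ag_fa fa_add fa_mult)+

definition trf where "trf G x = trace G x"

lemma trace_nondeg:
  assumes G: "aut_group G" and z: "\<forall>v. trace G (z * v) = 0"
  shows "z = 0"
proof (rule ccontr)
  assume nz: "z \<noteq> 0"
  have "\<exists>x0. trace G x0 \<noteq> 0"
  proof (rule ccontr)
    assume "\<not> ?thesis"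
    then have "\<forall>x. (\<Sum>g\<in>G. 1 * g x) = 0" by (simp add: trace_def)
    from dedekind_group[OF G this ag_id[OF G]] show False by simp
  qed
  then obtain x0 where "trace G x0 \<noteq> 0" by blast
  moreover have "z * (x0 / z) = x0" using nz by simp
  ultimately show False using z by metis
qed



definition ksub :: "'l::field set \<Rightarrow> 'l set \<Rightarrow> bool" where
  "ksub K V \<longleftrightarrow> 0 \<in> V \<and> (\<forall>x\<in>V. \<forall>y\<in>V. x + y \<in> V) \<and> (\<forall>k\<in>K. \<forall>x\<in>V. k * x \<in> V)"

lemma kf0: "kfield K \<Longrightarrow> 0 \<in> K" by (simp add: kfield_def)
lemma kf1: "kfield K \<Longrightarrow> 1 \<in> K" by (simp add: kfield_def)
lemma kfadd: "kfield K \<Longrightarrow> x \<in> K \<Longrightarrow> y \<in> K \<Longrightarrow> x + y \<in> K" by (simp add: kfield_def)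
lemma kfmult: "kfield K \<Longrightarrow> x \<in> K \<Longrightarrow> y \<in> K \<Longrightarrow> x * y \<in> K" by (simp add: kfield_def)
lemma kfminus: "kfield K \<Longrightarrow> x \<in> K \<Longrightarrow> - x \<in> K" by (simp add: kfield_def)
lemma kfinv: "kfield K \<Longrightarrow> x \<in> K \<Longrightarrow> inverse x \<in> K" by (simp add: kfield_def)

lemma ksub0: "ksub K V \<Longrightarrow> 0 \<in> V" by (simp add: ksub_def)
lemma ksubadd: "ksub K V \<Longrightarrow> x \<in> V \<Longrightarrow> y \<in> V \<Longrightarrow> x + y \<in> V" by (simp add: ksub_def)
lemma ksubsc: "ksub K V \<Longrightarrow> k \<in> K \<Longrightarrow> x \<in> V \<Longrightarrow> k * x \<in> V" by (simp add: ksub_def)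
lemma ksubdiff: "kfield K \<Longrightarrow> ksub K V \<Longrightarrow> x \<in> V \<Longrightarrow> y \<in> V \<Longrightarrow> k \<in> K \<Longrightarrow> x - k * y \<in> V"
  using ksubadd[of K V x "(-k) * y"] ksubsc[of K V "-k" y] kfminus[of K k] by simp

lemma ksub_Int: "ksub K V \<Longrightarrow> ksub K W \<Longrightarrow> ksub K (V \<inter> W)"
  by (simp add: ksub_def)

lemma kspan_fin:
  assumes K: "kfield K" and S: "finite S"
  shows "x \<in> kspan K S \<longleftrightarrow> (\<exists>c. (\<forall>v\<in>S. c v \<in> K) \<and> x = (\<Sum>v\<in>S. c v * v))"
proof
  assume "x \<in> kspan K S"
  then obtain F c where F: "finite F" "F \<subseteq> S" "\<forall>v\<in>F. c v \<in> K" "x = (\<Sum>v\<in>F. c v * v)"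
    by (auto simp: kspan_def)
  let ?c = "\<lambda>v. if v \<in> F then c v else 0"
  have "(\<Sum>v\<in>S. ?c v * v) = (\<Sum>v\<in>F. ?c v * v)"
    by (rule sum.mono_neutral_right) (use S F in auto)
  also have "\<dots> = x" using F by simp
  finally show "\<exists>c. (\<forall>v\<in>S. c v \<in> K) \<and> x = (\<Sum>v\<in>S. c v * v)"
    using F K kf0 by (intro exI[of _ ?c]) auto
next
  assume "\<exists>c. (\<forall>v\<in>S. c v \<in> K) \<and> x = (\<Sum>v\<in>S. c v * v)"
  then show "x \<in> kspan K S" using S by (auto simp: kspan_def)
qed

lemma kspan_empty: "kfield K \<Longrightarrow> kspan K {} = {0}"
  using kspan_fin[of K "{}"] by auto

lemma kspan_ksub:
  assumes K: "kfield K" and S: "finite S"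
  shows "ksub K (kspan K S)"
proof -
  have z: "0 \<in> kspan K S" unfolding kspan_fin[OF K S]
    using K kf0 by (intro exI[of _ "\<lambda>_. 0"]) auto
  have a: "x + y \<in> kspan K S" if xy: "x \<in> kspan K S" "y \<in> kspan K S" for x y
  proof -
    obtain c d where "\<forall>v\<in>S. c v \<in> K" "x = (\<Sum>v\<in>S. c v * v)" "\<forall>v\<in>S. d v \<in> K" "y = (\<Sum>v\<in>S. d v * v)"
      using xy kspan_fin[OF K S] by meson
    then show ?thesis unfolding kspan_fin[OF K S]
      using K by (auto intro!: exI[of _ "\<lambda>v. c v + d v"] simp: kfadd sum.distrib algebra_simps)
  qed
  have m: "k * x \<in> kspan K S" if kx: "k \<in> K" "x \<in> kspan K S" for k x
  proof -
    obtain c where "\<forall>v\<in>S. c v \<in> K" "x = (\<Sum>v\<in>S. c v * v)" using kx kspan_fin[OF K S] by auto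
    then show ?thesis unfolding kspan_fin[OF K S]
      using K kx by (auto intro!: exI[of _ "\<lambda>v. k * c v"] simp: kfmult sum_distrib_left algebra_simps)
  qed
  show ?thesis using z a m by (simp add: ksub_def)
qed

lemma ksub_sum:
  assumes V: "ksub K V" and S: "finite S"
  shows "S \<subseteq> V \<Longrightarrow> (\<forall>v\<in>S. c v \<in> K) \<Longrightarrow> (\<Sum>v\<in>S. c v * v) \<in> V"
  using S
proof (induction S rule: finite_induct)
  case empty then show ?case using V ksub0 by simp
next
  case (insert f S)
  then show ?case using V by (simp add: ksubadd ksubsc)
qed

lemma kspan_sub:
  assumes K: "kfield K" and S: "finite S" and V: "ksub K V" and SV: "S \<subseteq> V"
  shows "kspan K S \<subseteq> V"
  using ksub_sum[OF V S SV] kspan_fin[OF K S] by auto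

lemma kspan_insert_dec:
  assumes K: "kfield K" and S: "finite S" and f: "f \<notin> S" and x: "x \<in> kspan K (insert f S)"
  shows "\<exists>c\<in>K. x - c * f \<in> kspan K S"
proof -
  obtain c where c: "\<forall>v\<in>insert f S. c v \<in> K" "x = (\<Sum>v\<in>insert f S. c v * v)"
    using x kspan_fin[OF K] S by (meson finite_insert)
  then have "x - c f * f = (\<Sum>v\<in>S. c v * v)" using S f by simp
  then show ?thesis using c kspan_fin[OF K S] by auto
qed

lemma kspan_insert_intro:
  assumes K: "kfield K" and S: "finite S" and v: "v \<notin> S" and y: "y \<in> kspan K S" and k: "k \<in> K"
  shows "y + k * v \<in> kspan K (insert v S)"
proof -
  obtain c where c: "\<forall>v\<in>S. c v \<in> K" "y = (\<Sum>v\<in>S. c v * v)"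
    using y kspan_fin[OF K S] by auto
  let ?c = "c(v := k)"
  have "(\<Sum>u\<in>insert v S. ?c u * u) = k * v + (\<Sum>u\<in>S. ?c u * u)" using S v by simp
  also have "(\<Sum>u\<in>S. ?c u * u) = (\<Sum>u\<in>S. c u * u)" using v by (intro sum.cong) auto
  finally have "y + k * v = (\<Sum>u\<in>insert v S. ?c u * u)" using c by simp
  moreover have "\<forall>u\<in>insert v S. ?c u \<in> K" using c k by auto
  ultimately show ?thesis using kspan_fin[OF K] S by (meson finite_insert)
qed

lemma sub_dim:
  assumes K: "kfield K" and F: "finite F"
  shows "ksub K V \<Longrightarrow> V \<subseteq> kspan K F \<Longrightarrow> \<exists>F'. finite F' \<and> F' \<subseteq> V \<and> card F' \<le> card F \<and> kspan K F' = V"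
  using F
proof (induction F arbitrary: V rule: finite_induct)
  case empty
  then have "V = {0}" using kspan_empty[OF K] ksub0 by blast
  then show ?case using kspan_empty[OF K] by (intro exI[of _ "{}"]) auto
next
  case (insert f F0)
  let ?V0 = "V \<inter> kspan K F0"
  have V0: "ksub K ?V0" using ksub_Int insert.prems kspan_ksub[OF K insert.hyps(1)] by blast
  obtain F0' where F0': "finite F0'" "F0' \<subseteq> ?V0" "card F0' \<le> card F0" "kspan K F0' = ?V0"
    using insert.IH[OF V0] by blast
  show ?case
  proof (cases "V \<subseteq> kspan K F0")
    case True
    then have "?V0 = V" by blast
    then show ?thesis using F0' insert.hyps by (intro exI[of _ F0']) auto
  next
    case False
    then obtain v where v: "v \<in> V" "v \<notin> kspan K F0" by blast
    obtain c where c: "c \<in> K" "v - c * f \<in> kspan K F0"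
      using kspan_insert_dec[OF K insert.hyps(1,2)] v insert.prems(2) by blast
    have cnz: "c \<noteq> 0" using c v by auto
    have vF0': "v \<notin> F0'" using F0' v by auto
    have "V \<subseteq> kspan K (insert v F0')"
    proof
      fix x assume x: "x \<in> V"
      obtain d where d: "d \<in> K" "x - d * f \<in> kspan K F0"
        using kspan_insert_dec[OF K insert.hyps(1,2)] x insert.prems(2) by blast
      define q where "q = d * inverse c"
      have q: "q \<in> K" using d c K by (simp add: q_def kfmult kfinv)
      have "x - q * v = (x - d * f) - q * (v - c * f)"
        using cnz by (simp add: q_def algebra_simps)
      also have "\<dots> \<in> kspan K F0"
        using ksubdiff[OF K kspan_ksub[OF K insert.hyps(1)]] d c q by blast
      finally have "x - q * v \<in> ?V0"
        using ksubdiff[OF K insert.prems(1) x v(1) q] by blast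
      then have "x - q * v \<in> kspan K F0'" using F0' by simp
      from kspan_insert_intro[OF K F0'(1) vF0' this q] show "x \<in> kspan K (insert v F0')" by simp
    qed
    moreover have "kspan K (insert v F0') \<subseteq> V"
      using kspan_sub[OF K _ insert.prems(1)] F0' v by auto
    ultimately have "kspan K (insert v F0') = V" by blast
    moreover have "insert v F0' \<subseteq> V" using F0' v by auto
    moreover have "card (insert v F0') \<le> card (insert f F0)" using F0' vF0' insert.hyps by simp
    ultimately show ?thesis using F0' by (intro exI[of _ "insert v F0'"]) auto
  qed
qed

lemma kdim_mono:
  assumes K: "kfield K" and X: "finite X" and W: "ksub K W" "W \<subseteq> kspan K X"
    and V: "ksub K V" "V \<subseteq> W"
  shows "kdim K V \<le> kdim K W"
proof -
  let ?P = "\<lambda>W n. \<exists>F. finite F \<and> F \<subseteq> W \<and> card F = n \<and> kspan K F = W"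
  have "\<exists>n. ?P W n" using sub_dim[OF K X W] by blast
  then have PW: "?P W (kdim K W)" unfolding kdim_def by (rule LeastI_ex)
  then obtain FW where FW: "finite FW" "FW \<subseteq> W" "card FW = kdim K W" "kspan K FW = W" by blast
  obtain F' where F': "finite F'" "F' \<subseteq> V" "card F' \<le> card FW" "kspan K F' = V"
    using sub_dim[OF K FW(1) V(1)] V(2) FW(4) by blast
  have "kdim K V \<le> card F'" unfolding kdim_def by (rule Least_le) (use F' in blast)
  then show ?thesis using F' FW by simp
qed



lemma sum_fun_apply: "(\<Sum>x\<in>A. f x) g = (\<Sum>x\<in>A. (f x g :: 'b::comm_monoid_add))"
  by (induct A rule: infinite_finite_induct) (simp_all add: plus_fun_def zero_fun_def)

lemma artin:
  fixes G :: "('l::field \<Rightarrow> 'l) set"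
  assumes G: "aut_group G"
  shows "\<exists>X. finite X \<and> (\<forall>y. y \<in> kspan (fixed_field G) X)"
proof -
  interpret vs: vector_space "\<lambda>(c::'l) (f::('l\<Rightarrow>'l)\<Rightarrow>'l). (\<lambda>g. c * f g)"
    by unfold_locales (auto simp: fun_eq_iff algebra_simps plus_fun_def)
  define phi where "phi x = (\<lambda>g. if g \<in> G then g x else (0::'l))" for x
  define T where "T = (\<lambda>h (g::'l\<Rightarrow>'l). if g = h then (1::'l) else 0) ` G"
  have fG: "finite G" using G by (rule ag_finite)
  have fT: "finite T" using fG by (simp add: T_def)
  have phiT: "phi x \<in> vs.span T" for x
  proof -
    have "phi x = (\<Sum>h\<in>G. (\<lambda>g. h x * (if g = h then 1 else 0)))"
    proof (rule ext)
      fix g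
      have "(\<Sum>h\<in>G. (\<lambda>g. h x * (if g = h then 1 else 0))) g = (\<Sum>h\<in>G. if g = h then g x else 0)"
        unfolding sum_fun_apply by (rule sum.cong) auto
      also have "\<dots> = phi x g" using fG by (simp add: phi_def sum.delta)
      finally show "phi x g = (\<Sum>h\<in>G. (\<lambda>g. h x * (if g = h then 1 else 0))) g" by simp
    qed
    also have "\<dots> \<in> vs.span T"
    proof (rule vs.span_sum)
      fix h assume "h \<in> G"
      then have "(\<lambda>g. if g = h then (1::'l) else 0) \<in> T" by (simp add: T_def)
      from vs.span_scale[OF vs.span_base[OF this], of "h x"]
      show "(\<lambda>g. h x * (if g = h then 1 else 0)) \<in> vs.span T" .
    qed
    finally show ?thesis .
  qed
  obtain B where B: "B \<subseteq> range phi" "vs.independent B" "range phi \<subseteq> vs.span B"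
    using vs.maximal_independent_subset by blast
  have fB: "finite B" using vs.independent_span_bound[OF fT B(2)] B(1) phiT by blast
  have inj: "inj phi"
  proof
    fix x y assume "phi x = phi y"
    then have "phi x id = phi y id" by simp
    then show "x = y" using ag_id[OF G] by (simp add: phi_def)
  qed
  define X where "X = phi -` B"
  have BX: "B = phi ` X" using B(1) by (auto simp: X_def)
  have fX: "finite X" using fB inj by (simp add: X_def finite_vimageI)
  let ?K = "fixed_field G"
  have "y \<in> kspan ?K X" for y
  proof -
    have "phi y \<in> vs.span B" using B(3) by blast
    then obtain u where u: "phi y = (\<Sum>v\<in>B. (\<lambda>g. u v * v g))"
      using vs.span_finite[OF fB] by blast
    have uK: "h (u v) = u v" if h: "h \<in> G" and v: "v \<in> B" for h v
    proof -
      have fh: "field_aut h" using G h by (rule ag_fa)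
      have "phi y = (\<Sum>v\<in>B. (\<lambda>g. h (u v) * v g))"
      proof (rule ext)
        fix g
        show "phi y g = (\<Sum>v\<in>B. (\<lambda>g. h (u v) * v g)) g"
        proof (cases "g \<in> G")
          case False
          have "v g = 0" if "v \<in> B" for v using that B(1) False by (auto simp: phi_def)
          then have "(\<Sum>v\<in>B. h (u v) * v g) = 0" by (intro sum.neutral) simp
          then show ?thesis using False by (simp add: sum_fun_apply phi_def)
        next
          case True
          define g0 where "g0 = inv h \<circ> g"
          have g0: "g0 \<in> G" using G h True by (simp add: g0_def ag_comp ag_inv)
          have hg0: "h (g0 z) = g z" for z using fh by (simp add: g0_def fa_inv_cancel1)
          have "g0 y = (\<Sum>v\<in>B. u v * v g0)"
            using fun_cong[OF u, of g0] g0 by (simp add: phi_def sum_fun_apply)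
          then have "h (g0 y) = (\<Sum>v\<in>B. h (u v) * h (v g0))"
            using fh by (simp add: fa_sum fa_mult)
          also have "\<dots> = (\<Sum>v\<in>B. h (u v) * v g)"
          proof (rule sum.cong)
            fix v assume "v \<in> B"
            then obtain x where "v = phi x" using B(1) by blast
            then show "h (u v) * h (v g0) = h (u v) * v g" using g0 True by (simp add: phi_def hg0)
          qed simp
          finally show ?thesis using True by (simp add: phi_def sum_fun_apply hg0)
        qed
      qed
      then have "(\<Sum>v\<in>B. (\<lambda>g. (u v - h (u v)) * v g)) = 0"
        using u by (simp add: fun_eq_iff sum_fun_apply algebra_simps sum_subtractf)
      then show ?thesis
        using vs.independent_explicit_finite_subsets[THEN iffD1, OF B(2), rule_format, OF order_refl fB, of "\<lambda>v. u v - h (u v)"] v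
        by simp
    qed
    have "y = phi y id" using ag_id[OF G] by (simp add: phi_def)
    also have "\<dots> = (\<Sum>v\<in>B. u v * v id)" by (simp add: u sum_fun_apply)
    also have "\<dots> = (\<Sum>x\<in>X. u (phi x) * phi x id)"
      unfolding BX using sum.reindex[of phi X "\<lambda>v. u v * v id"] inj by (simp add: inj_on_subset)
    also have "\<dots> = (\<Sum>x\<in>X. u (phi x) * x)" using ag_id[OF G] by (simp add: phi_def)
    finally show ?thesis
      unfolding kspan_fin[OF kfield_fixed[OF G] fX]
      using uK BX by (intro exI[of _ "\<lambda>x. u (phi x)"]) (auto simp: fixed_field_def)
  qed
  then show ?thesis using fX by blast
qed



definition adj :: "('l \<Rightarrow> 'l) set \<Rightarrow> 'l::field skew \<Rightarrow> 'l \<Rightarrow> 'l" where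
  "adj G a v = (\<Sum>g\<in>G. inv g (a g * v))"

definition wco :: "('l \<Rightarrow> 'l) set \<Rightarrow> 'l::field skew \<Rightarrow> 'l skew \<Rightarrow> 'l skew" where
  "wco G a e = (\<lambda>g. if g \<in> G then (\<Sum>k\<in>G. g (a k) * e (g \<circ> k)) else 0)"

lemma adjoint:
  assumes G: "aut_group G"
  shows "trace G (skew_eval G a u * v) = trace G (u * adj G a v)"
proof -
  have fa: "\<And>h. h \<in> G \<Longrightarrow> field_aut h" using G by (rule ag_fa)
  have "trace G (skew_eval G a u * v) = (\<Sum>h\<in>G. \<Sum>g\<in>G. h (a g * g u * v))"
    unfolding trace_def skew_eval_def sum_distrib_right by (intro sum.cong refl) (simp add: fa fa_sum)
  also have "\<dots> = (\<Sum>g\<in>G. \<Sum>h\<in>G. h (a g * g u * v))" by (rule sum.swap)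
  also have "\<dots> = (\<Sum>g\<in>G. \<Sum>h\<in>G. h (u * inv g (a g * v)))"
  proof (rule sum.cong[OF refl])
    fix g assume g: "g \<in> G"
    have fg: "field_aut g" using fa g .
    have "(\<Sum>h\<in>G. h (u * inv g (a g * v))) = (\<Sum>h\<in>G. (h \<circ> g) (u * inv g (a g * v)))"
      using reindex_right[OF G g, of "\<lambda>h. h (u * inv g (a g * v))"] by simp
    also have "\<dots> = (\<Sum>h\<in>G. h (a g * g u * v))"
      using fg by (intro sum.cong refl) (simp add: fa_mult fa_inv_cancel1 algebra_simps)
    finally show "(\<Sum>h\<in>G. h (a g * g u * v)) = (\<Sum>h\<in>G. h (u * inv g (a g * v)))" by simp
  qed
  also have "\<dots> = (\<Sum>h\<in>G. \<Sum>g\<in>G. h (u * inv g (a g * v)))" by (rule sum.swap)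
  also have "\<dots> = trace G (u * adj G a v)"
    unfolding trace_def adj_def sum_distrib_left by (intro sum.cong refl) (simp add: fa fa_sum)
  finally show ?thesis .
qed

lemma eval_wco:
  assumes G: "aut_group G"
  shows "skew_eval G (wco G a e) x = skew_eval G e (adj G a x)"
proof -
  have fa: "\<And>h. h \<in> G \<Longrightarrow> field_aut h" using G by (rule ag_fa)
  have "skew_eval G e (adj G a x) = (\<Sum>m\<in>G. \<Sum>k\<in>G. e m * m (inv k (a k * x)))"
    unfolding skew_eval_def adj_def by (intro sum.cong refl) (simp add: fa fa_sum sum_distrib_left)
  also have "\<dots> = (\<Sum>k\<in>G. \<Sum>m\<in>G. e m * m (inv k (a k * x)))" by (rule sum.swap)
  also have "\<dots> = (\<Sum>k\<in>G. \<Sum>g\<in>G. g (a k) * e (g \<circ> k) * g x)"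
  proof (rule sum.cong[OF refl])
    fix k assume k: "k \<in> G"
    have fk: "field_aut k" using fa k .
    have "(\<Sum>m\<in>G. e m * m (inv k (a k * x))) = (\<Sum>g\<in>G. e (g \<circ> k) * (g \<circ> k) (inv k (a k * x)))"
      using reindex_right[OF G k, of "\<lambda>m. e m * m (inv k (a k * x))"] by simp
    also have "\<dots> = (\<Sum>g\<in>G. g (a k) * e (g \<circ> k) * g x)"
      using fk fa by (intro sum.cong refl) (simp add: fa_mult fa_inv_cancel1 algebra_simps)
    finally show "(\<Sum>m\<in>G. e m * m (inv k (a k * x))) = (\<Sum>g\<in>G. g (a k) * e (g \<circ> k) * g x)" .
  qed
  also have "\<dots> = (\<Sum>g\<in>G. \<Sum>k\<in>G. g (a k) * e (g \<circ> k) * g x)" by (rule sum.swap)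
  also have "\<dots> = skew_eval G (wco G a e) x"
    unfolding skew_eval_def wco_def by (simp add: sum_distrib_right)
  finally show ?thesis by simp
qed

lemma inner_comp:
  assumes G: "aut_group G"
  shows "skew_inner G (skew_comp G b a) e = (\<Sum>g\<in>G. b g * wco G a e g)"
proof -
  have "skew_inner G (skew_comp G b a) e
      = (\<Sum>h\<in>G. \<Sum>g\<in>G. \<Sum>k\<in>G. if g \<circ> k = h then b g * g (a k) * e h else 0)"
    unfolding skew_inner_def skew_comp_def sum_distrib_right
    by (intro sum.cong refl) (simp add: if_distrib)
  also have "\<dots> = (\<Sum>g\<in>G. \<Sum>h\<in>G. \<Sum>k\<in>G. if g \<circ> k = h then b g * g (a k) * e h else 0)"
    by (rule sum.swap)
  also have "\<dots> = (\<Sum>g\<in>G. \<Sum>k\<in>G. \<Sum>h\<in>G. if g \<circ> k = h then b g * g (a k) * e h else 0)"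
    by (rule sum.cong[OF refl], rule sum.swap)
  also have "\<dots> = (\<Sum>g\<in>G. \<Sum>k\<in>G. b g * g (a k) * e (g \<circ> k))"
  proof (intro sum.cong refl)
    fix g k assume "g \<in> G" "k \<in> G"
    then have "g \<circ> k \<in> G" using G ag_comp by blast
    then show "(\<Sum>h\<in>G. if g \<circ> k = h then b g * g (a k) * e h else 0) = b g * g (a k) * e (g \<circ> k)"
      using ag_finite[OF G] by (simp add: sum.delta)
  qed
  also have "\<dots> = (\<Sum>g\<in>G. b g * wco G a e g)"
    unfolding wco_def by (intro sum.cong refl) (simp add: sum_distrib_left algebra_simps)
  finally show ?thesis .
qed

lemma ksub_range:
  assumes G: "aut_group G"
  shows "ksub (fixed_field G) (range (skew_eval G a))"
proof -
  have fa: "\<And>h. h \<in> G \<Longrightarrow> field_aut h" using G by (rule ag_fa)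
  have "skew_eval G a 0 = 0" by (simp add: skew_eval_def fa fa_zero)
  moreover have "skew_eval G a x + skew_eval G a y = skew_eval G a (x + y)" for x y
    by (simp add: skew_eval_def fa fa_add sum.distrib algebra_simps)
  moreover have "k * skew_eval G a x = skew_eval G a (k * x)" if "k \<in> fixed_field G" for k x
    unfolding skew_eval_def sum_distrib_left
    by (intro sum.cong refl) (use that in \<open>auto simp add: fa fa_mult fixed_field_def\<close>)
  ultimately show ?thesis unfolding ksub_def by (auto simp del: range_eq_singletonD)
qed



lemma trace_zero: "aut_group G \<Longrightarrow> trace G 0 = 0"
  by (simp add: trace_def ag_fa fa_zero)

lemma adj_in_supp:
  assumes G: "aut_group G"
  shows "adj G e v \<in> skew_supp G e"
  unfolding skew_supp_def skew_ker_def
proof (safe)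
  fix x assume "skew_eval G e x = 0"
  then have "trace G (skew_eval G e x * v) = 0" using trace_zero[OF G] by simp
  then show "trace G (x * adj G e v) = 0" using adjoint[OF G] by simp
qed

theorem mainTheorem11:
  fixes G :: "('l::field \<Rightarrow> 'l) set"
    and A B C :: "'l skew set"
    and c e :: "'l skew"
  assumes "aut_group G"
    and "lcode G A" and "lcode G B" and "lcode G C"
    and "code_prod G B A \<subseteq> dual_code G C"
    and "c \<in> C" and "e \<in> skew_alg G"
  shows "Kset G A B (\<lambda>g. c g + e g) = Kset G A B e
    \<and> short_code G (skew_supp G e) A \<subseteq> Kset G A B e
    \<and> (enat (skew_rank G e) < min_dist G (dual_code G B) \<longrightarrow>
           short_code G (skew_supp G e) A = Kset G A B e)"
proof -
  note G = assms(1)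
  have fG: "finite G" using G by (rule ag_finite)
  have cz: "skew_inner G (skew_comp G b a) c = 0" if "a \<in> A" "b \<in> B" for a b
  proof -
    have "skew_comp G b a \<in> code_prod G B A"
      unfolding code_prod_def lspan_def using that
      by (intro CollectI exI[of _ "{skew_comp G b a}"] exI[of _ "\<lambda>_. 1"]) auto
    then have "skew_comp G b a \<in> dual_code G C" using assms(5) by blast
    then show ?thesis using assms(6) by (simp add: dual_code_def)
  qed
  have p1: "Kset G A B (\<lambda>g. c g + e g) = Kset G A B e"
  proof -
    have "skew_inner G (skew_comp G b a) (\<lambda>g. c g + e g) = skew_inner G (skew_comp G b a) e"
      if "a \<in> A" "b \<in> B" for a b
      using cz[OF that] by (simp add: skew_inner_def distrib_left sum.distrib)
    then show ?thesis unfolding Kset_def by auto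
  qed
  have p2: "short_code G (skew_supp G e) A \<subseteq> Kset G A B e"
  proof
    fix a assume a: "a \<in> short_code G (skew_supp G e) A"
    then have aA: "a \<in> A" and sk: "skew_supp G e \<subseteq> skew_ker G a" by (auto simp: short_code_def)
    have ez: "skew_eval G e (adj G a x) = 0" for x
    proof (rule trace_nondeg[OF G], rule allI)
      fix v
      have "trace G (skew_eval G e (adj G a x) * v) = trace G (adj G a x * adj G e v)"
        by (rule adjoint[OF G])
      also have "\<dots> = trace G (adj G e v * adj G a x)" by (simp add: mult.commute)
      also have "\<dots> = trace G (skew_eval G a (adj G e v) * x)" by (rule adjoint[OF G, symmetric])
      also have "skew_eval G a (adj G e v) = 0" using sk adj_in_supp[OF G] by (auto simp: skew_ker_def)
      finally show "trace G (skew_eval G e (adj G a x) * v) = 0" using trace_zero[OF G] by simp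
    qed
    have wz: "wco G a e g = 0" if "g \<in> G" for g
      using dedekind_group[OF G _ that, of "wco G a e"] ez eval_wco[OF G]
      by (simp add: skew_eval_def)
    show "a \<in> Kset G A B e"
      unfolding Kset_def using aA wz by (simp add: inner_comp[OF G])
  qed
  have p3: "Kset G A B e \<subseteq> short_code G (skew_supp G e) A"
    if lt: "enat (skew_rank G e) < min_dist G (dual_code G B)"
  proof
    fix a assume a: "a \<in> Kset G A B e"
    then have aA: "a \<in> A" and ik: "\<forall>b\<in>B. skew_inner G (skew_comp G b a) e = 0"
      by (auto simp: Kset_def)
    let ?w = "wco G a e"
    have wd: "?w \<in> dual_code G B"
    proof -
      have "?w \<in> skew_alg G" by (simp add: skew_alg_def wco_def)
      moreover have "skew_inner G ?w b = 0" if "b \<in> B" for b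
        using ik that inner_comp[OF G, of b a e] by (simp add: skew_inner_def mult.commute)
      ultimately show ?thesis by (simp add: dual_code_def)
    qed
    have w0: "?w = (\<lambda>_. 0)"
    proof (rule ccontr)
      assume nz: "?w \<noteq> (\<lambda>_. 0)"
      let ?K = "fixed_field G"
      obtain X where X: "finite X" "\<forall>y. y \<in> kspan ?K X" using artin[OF G] by blast
      have "skew_rank G ?w \<le> skew_rank G e"
        unfolding skew_rank_def
      proof (rule kdim_mono[OF kfield_fixed[OF G] X(1) ksub_range[OF G]])
        show "range (skew_eval G e) \<subseteq> kspan ?K X" using X by blast
        show "ksub ?K (range (skew_eval G ?w))" by (rule ksub_range[OF G])
        show "range (skew_eval G ?w) \<subseteq> range (skew_eval G e)"
          using eval_wco[OF G] by auto
      qed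
      moreover have "min_dist G (dual_code G B) \<le> enat (skew_rank G ?w)"
        unfolding min_dist_def using wd nz by (intro INF_lower) auto
      ultimately show False using lt by (meson enat_ord_simps(1) le_less_trans not_le order_trans)
    qed
    have ez: "skew_eval G e (adj G a x) = 0" for x
      using eval_wco[OF G, of a e x] w0 by (simp add: skew_eval_def)
    have "skew_supp G e \<subseteq> skew_ker G a"
    proof
      fix y assume y: "y \<in> skew_supp G e"
      have "skew_eval G a y = 0"
      proof (rule trace_nondeg[OF G], rule allI)
        fix v
        have "trace G (skew_eval G a y * v) = trace G (adj G a v * y)"
          using adjoint[OF G, of a y v] by (simp add: mult.commute)
        also have "\<dots> = 0" using y ez by (auto simp: skew_supp_def skew_ker_def)
        finally show "trace G (skew_eval G a y * v) = 0" .
      qed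
      then show "y \<in> skew_ker G a" by (simp add: skew_ker_def)
    qed
    then show "a \<in> short_code G (skew_supp G e) A" using aA by (simp add: short_code_def)
  qed
  show ?thesis using p1 p2 p3 by blast
qed


end
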